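(* In the infinite-color urn model with parameters $\ell,s$ and initial cumulative counts $m_1,\dots,m_s$, for any $k>s$ and any positive integer $q$: (a) $\mathbb{E}M_k(n)^q\asymp n^{q\ell/(\ell+1)}$ as $n\to\infty$, i.e. the ratio is bounded above and below by positive constants not depending on $n$; (b) $\mathbb{E}\big\{M_k(n)(M_k(n)+1)\cdots(M_k(n)+\ell)\big\}=\big(m_s+(\ell+1)(k-s)+\ell\big)\,n^\ell\left(\frac{\ell+1}{\ell}\right)^{\ell}\big(1+O(n^{-1})\big)$ as $n\to\infty$; (c) $\displaystyle\limsup_{n\to\infty}\mathbb{E}\Big(\frac{n^{\ell/(\ell+1)}}{M_k(n)}\Big)<\infty$.
   Context: Infinite-color urn model: at time $0$ the urn contains balls of colors $1,\dots,s$ (at least one of each). Fix an integer $\ell\ge1$. At the $n$th step a ball is drawn uniformly at random and returned with one additional ball of the same color; if $n$ is a multiple of $\ell$, one ball of the new color $s+n/\ell$ is added after the $n$th draw. $M_k(n)$ is the number of balls with colors in $\{1,\dots,k\}$ after step $n$ is completed, and $m_k=M_k(0)$ (with $m_1\ge1$, $m_{k+1}-m_k\ge1$ for $k<s$). *)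

theory Defs
  imports "HOL-Probability.Probability" "HOL-Library.Landau_Symbols"
begin

text \<open>The urn is represented as a multiset of colours (positive naturals).
  The cumulative initial counts are m 1, ..., m s, with the convention m_0 = 0;
  colour k (1 <= k <= s) initially has m k - m (k-1) balls.\<close>

definition urn_init :: "nat \<Rightarrow> (nat \<Rightarrow> nat) \<Rightarrow> nat multiset" where
  "urn_init s m = (\<Sum>k\<in>{1..s}. replicate_mset (m k - (if k = 1 then 0 else m (k - 1))) k)"

definition urn_step :: "nat \<Rightarrow> nat \<Rightarrow> nat \<Rightarrow> nat multiset \<Rightarrow> nat multiset pmf" where
  "urn_step l s n U = map_pmf
     (\<lambda>x. U + {#x#} + (if l dvd n then {#s + n div l#} else {#})) (pmf_of_multiset U)"

primrec urn :: "nat \<Rightarrow> nat \<Rightarrow> (nat \<Rightarrow> nat) \<Rightarrow> nat \<Rightarrow> nat multiset pmf" where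
  "urn l s m 0 = return_pmf (urn_init s m)"
| "urn l s m (Suc n) = bind_pmf (urn l s m n) (urn_step l s (Suc n))"

definition Mk :: "nat \<Rightarrow> nat multiset \<Rightarrow> nat" where
  "Mk k U = size (filter_mset (\<lambda>c. 1 \<le> c \<and> c \<le> k) U)"

end

theory Submission
  imports Defs
begin



lemma size_sum_set: "finite A \<Longrightarrow> size (\<Sum>x\<in>A. (f x :: 'b multiset)) = (\<Sum>x\<in>A. size (f x))"
  by (induction A rule: finite_induct) auto

locale urnctx =
  fixes l s k :: nat and m :: "nat \<Rightarrow> nat"
  assumes l1: "l \<ge> 1" and s1: "s \<ge> 1" and m1: "m 1 \<ge> 1"
    and mi: "\<And>j. 1 \<le> j \<Longrightarrow> j < s \<Longrightarrow> m (Suc j) - m j \<ge> 1" and ks: "k > s"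
begin

definition T :: "nat \<Rightarrow> nat" where "T n = m s + n + n div l"
definition n0 :: nat where "n0 = (k - s) * l"

lemma m_tele: "1 \<le> t \<Longrightarrow> t \<le> s \<Longrightarrow> m 1 \<le> m t \<and>
   (\<Sum>j\<in>{1..t}. (m j - (if j = 1 then 0 else m (j - 1)))) = m t"
proof (induction t)
  case 0 then show ?case by simp
next
  case (Suc t)
  show ?case
  proof (cases "t = 0")
    case True then show ?thesis by simp
  next
    case False
    with Suc have ih: "m 1 \<le> m t \<and> (\<Sum>j\<in>{1..t}. (m j - (if j = 1 then 0 else m (j - 1)))) = m t" by auto
    have "m (Suc t) - m t \<ge> 1" using mi[of t] Suc False by auto
    hence le: "m t < m (Suc t)" by linarith
    have "{1..Suc t} = insert (Suc t) {1..t}" by auto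
    then show ?thesis using ih le False by simp
  qed
qed

lemma ms_pos: "m s \<ge> 1"
  using m_tele[of s] s1 m1 by auto

lemma init_size: "size (urn_init s m) = m s"
  unfolding urn_init_def using m_tele[of s] s1 by (simp add: size_sum_set)

lemma init_set: "set_mset (urn_init s m) \<subseteq> {1..s}"
  unfolding urn_init_def by (auto simp: set_mset_sum split: if_splits)

lemma T_Suc: "T (Suc n) = T n + 1 + (if l dvd Suc n then 1 else 0)"
  unfolding T_def using div_Suc[of n l] l1 by (auto simp: dvd_eq_mod_eq_0)

lemma T_pos: "T n \<ge> 1" using ms_pos unfolding T_def by simp

lemma support:
  "U \<in> set_pmf (urn l s m n) \<Longrightarrow> size U = T n \<and> set_mset U \<subseteq> {1..s + n div l}"
proof (induction n arbitrary: U)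
  case 0 then show ?case using init_size init_set by (simp add: T_def)
next
  case (Suc n)
  from Suc.prems obtain V where V: "V \<in> set_pmf (urn l s m n)"
    and U: "U \<in> set_pmf (urn_step l s (Suc n) V)" by auto
  from Suc.IH[OF V] have ih: "size V = T n" "set_mset V \<subseteq> {1..s + n div l}" by auto
  have ne: "V \<noteq> {#}" using ih T_pos[of n] by auto
  from U ne obtain x where x: "x \<in># V" and Ux: "U = V + {#x#} + (if l dvd Suc n then {#s + Suc n div l#} else {#})"
    unfolding urn_step_def by auto
  have dm: "n div l \<le> Suc n div l" by (simp add: div_le_mono)
  hence sub: "set_mset V \<subseteq> {1..s + Suc n div l}"
  proof (intro subsetI)
    fix y assume "y \<in> set_mset V"
    then have "y \<in> {1..s + n div l}" using ih(2) by blast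
    then have y1: "1 \<le> y" and y2: "y \<le> s + n div l" by auto
    have "y \<le> s + Suc n div l" using dm y2 by linarith
    then show "y \<in> {1..s + Suc n div l}" using y1 by simp
  qed
  have "l dvd Suc n \<Longrightarrow> Suc n div l \<ge> 1" using l1
    by (metis One_nat_def Suc_leI dvd_imp_le dvd_mult_div_cancel mult_0_right nat.distinct(1) neq0_conv zero_less_Suc)
  then show ?case using ih x sub unfolding Ux by (auto simp: T_Suc)
qed

lemma finite_support: "finite (set_pmf (urn l s m n))"
proof (induction n)
  case 0 then show ?case by simp
next
  case (Suc n)
  have "finite (set_pmf (urn_step l s (Suc n) V))" if "V \<in> set_pmf (urn l s m n)" for V
  proof -
    have "V \<noteq> {#}" using support[OF that] T_pos[of n] by auto
    then show ?thesis unfolding urn_step_def by simp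
  qed
  then show ?case using Suc by simp
qed

end



lemma sum_count_mset:
  "(\<Sum>x\<in>set_mset V. real (count V x) * h x) = (\<Sum>x\<in>#V. h x)"
proof (induction V)
  case empty show ?case by simp
next
  case (add a V)
  have "(\<Sum>x\<in>set_mset (add_mset a V). real (count (add_mset a V) x) * h x)
      = (\<Sum>x\<in>set_mset (add_mset a V). real (count V x) * h x + (if x = a then h a else 0))"
    by (intro sum.cong) (auto simp: algebra_simps)
  also have "\<dots> = (\<Sum>x\<in>set_mset (add_mset a V). real (count V x) * h x) + h a"
    by (simp add: sum.distrib)
  also have "(\<Sum>x\<in>set_mset (add_mset a V). real (count V x) * h x) = (\<Sum>x\<in>set_mset V. real (count V x) * h x)"
    by (cases "a \<in># V") (auto simp: insert_absorb not_in_iff)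
  finally show ?case using add by simp
qed

lemma sum_mset_if:
  "(\<Sum>x\<in>#V. (if P x then a else b)) = (a::real) * size (filter_mset P V) + b * (size V - size (filter_mset P V))"
proof (induction V)
  case empty show ?case by simp
next
  case (add x V)
  have "size (filter_mset P V) \<le> size V" by simp
  then show ?case using add by (auto simp: algebra_simps of_nat_diff Suc_diff_le)
qed

lemma integral_pmf_of_multiset_fin:
  assumes "V \<noteq> {#}"
  shows "measure_pmf.expectation (pmf_of_multiset V) (g::_\<Rightarrow>real) = (\<Sum>x\<in>#V. g x) / size V"
proof -
  have "measure_pmf.expectation (pmf_of_multiset V) g = (\<Sum>x\<in>set_mset V. g x * pmf (pmf_of_multiset V) x)"
    by (rule integral_measure_pmf_real) (use assms in auto)
  also have "\<dots> = (\<Sum>x\<in>set_mset V. real (count V x) * g x) / size V"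
    using assms by (simp add: sum_divide_distrib ac_simps)
  also have "\<dots> = (\<Sum>x\<in>#V. g x) / size V" by (simp add: sum_count_mset)
  finally show ?thesis .
qed

lemma integral_bind_finite:
  assumes fin: "finite (set_pmf M)" and finN: "\<And>x. x \<in> set_pmf M \<Longrightarrow> finite (set_pmf (N x))"
  shows "measure_pmf.expectation (bind_pmf M N) (f::_\<Rightarrow>real)
       = measure_pmf.expectation M (\<lambda>x. measure_pmf.expectation (N x) f)"
proof -
  define S where "S = (\<Union>x\<in>set_pmf M. set_pmf (N x))"
  have finS: "finite S" unfolding S_def using fin finN by auto
  have "measure_pmf.expectation (bind_pmf M N) f = (\<Sum>a\<in>S. f a * pmf (bind_pmf M N) a)"
    by (rule integral_measure_pmf_real) (use finS in \<open>auto simp: S_def\<close>)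
  also have "\<dots> = (\<Sum>a\<in>S. f a * (\<Sum>x\<in>set_pmf M. pmf (N x) a * pmf M x))"
  proof (intro sum.cong refl)
    fix a
    have "pmf (bind_pmf M N) a = measure_pmf.expectation M (\<lambda>x. pmf (N x) a)" by (rule pmf_bind)
    also have "\<dots> = (\<Sum>x\<in>set_pmf M. pmf (N x) a * pmf M x)"
      by (rule integral_measure_pmf_real) (use fin in auto)
    finally show "f a * pmf (bind_pmf M N) a = f a * (\<Sum>x\<in>set_pmf M. pmf (N x) a * pmf M x)" by simp
  qed
  also have "\<dots> = (\<Sum>a\<in>S. \<Sum>x\<in>set_pmf M. f a * pmf (N x) a * pmf M x)"
    by (simp add: sum_distrib_left mult.assoc)
  also have "\<dots> = (\<Sum>x\<in>set_pmf M. \<Sum>a\<in>S. f a * pmf (N x) a * pmf M x)"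
    by (rule sum.swap)
  also have "\<dots> = (\<Sum>x\<in>set_pmf M. (\<Sum>a\<in>S. f a * pmf (N x) a) * pmf M x)"
    by (simp add: sum_distrib_right)
  also have "\<dots> = (\<Sum>x\<in>set_pmf M. measure_pmf.expectation (N x) f * pmf M x)"
  proof (intro sum.cong refl)
    fix x assume x: "x \<in> set_pmf M"
    have "measure_pmf.expectation (N x) f = (\<Sum>a\<in>S. f a * pmf (N x) a)"
      by (rule integral_measure_pmf_real) (use finS x in \<open>auto simp: S_def\<close>)
    then show "(\<Sum>a\<in>S. f a * pmf (N x) a) * pmf M x = measure_pmf.expectation (N x) f * pmf M x" by simp
  qed
  also have "\<dots> = measure_pmf.expectation M (\<lambda>x. measure_pmf.expectation (N x) f)"
    by (rule integral_measure_pmf_real[symmetric]) (use fin in auto)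
  finally show ?thesis .
qed

context urnctx begin

definition E :: "nat \<Rightarrow> (nat \<Rightarrow> real) \<Rightarrow> real" where
  "E n f = measure_pmf.expectation (urn l s m n) (\<lambda>U. f (Mk k U))"

lemma Mk_add: "Mk k (U + V) = Mk k U + Mk k V"
  unfolding Mk_def by simp

lemma Mk_single: "Mk k {#x#} = (if 1 \<le> x \<and> x \<le> k then 1 else 0)"
  unfolding Mk_def by simp

lemma drift:
  assumes "n \<ge> n0"
  shows "E (Suc n) f = measure_pmf.expectation (urn l s m n)
     (\<lambda>U. f (Mk k U) + real (Mk k U) / real (T n) * (f (Mk k U + 1) - f (Mk k U)))"
proof -
  have "E (Suc n) f = measure_pmf.expectation (urn l s m n)
          (\<lambda>V. measure_pmf.expectation (urn_step l s (Suc n) V) (\<lambda>U. f (Mk k U)))"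
    unfolding E_def
  proof (simp only: urn.simps, rule integral_bind_finite[OF finite_support])
    fix V assume V: "V \<in> set_pmf (urn l s m n)"
    have "V \<noteq> {#}" using support[OF V] T_pos[of n] by auto
    then show "finite (set_pmf (urn_step l s (Suc n) V))" unfolding urn_step_def by simp
  qed
  also have "\<dots> = measure_pmf.expectation (urn l s m n)
     (\<lambda>U. f (Mk k U) + real (Mk k U) / real (T n) * (f (Mk k U + 1) - f (Mk k U)))"
  proof (intro integral_cong_AE AE_pmfI)
    fix V assume V: "V \<in> set_pmf (urn l s m n)"
    have sz: "size V = T n" using support[OF V] by auto
    have ne: "V \<noteq> {#}" using sz T_pos[of n] by auto
    have extra: "Mk k (if l dvd Suc n then {#s + Suc n div l#} else {#}) = 0"
    proof (cases "l dvd Suc n")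
      case True
      then obtain d where d: "Suc n = l * d" by blast
      have "(k - s) * l \<le> n" using assms unfolding n0_def by simp
      hence "(k - s) * l < l * d" using d by linarith
      hence "d > k - s" by (metis mult.commute mult_less_cancel2)
      hence "Suc n div l = d" using d l1 by simp
      with \<open>d > k - s\<close> show ?thesis using True ks unfolding Mk_def by auto
    qed (simp add: Mk_def)
    have key: "Mk k (V + {#x#} + (if l dvd Suc n then {#s + Suc n div l#} else {#}))
        = Mk k V + (if 1 \<le> x \<and> x \<le> k then 1 else 0)" for x
      unfolding Mk_add extra Mk_single by simp
    have "measure_pmf.expectation (urn_step l s (Suc n) V) (\<lambda>U. f (Mk k U))
        = measure_pmf.expectation (pmf_of_multiset V)
            (\<lambda>x. if 1 \<le> x \<and> x \<le> k then f (Mk k V + 1) else f (Mk k V))"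
      unfolding urn_step_def integral_map_pmf
      by (intro Bochner_Integration.integral_cong refl) (subst key, simp)
    also have "\<dots> = (f (Mk k V + 1) * Mk k V + f (Mk k V) * (size V - Mk k V)) / size V"
      by (simp add: integral_pmf_of_multiset_fin[OF ne] sum_mset_if Mk_def)
    also have "\<dots> = f (Mk k V) + real (Mk k V) / real (T n) * (f (Mk k V + 1) - f (Mk k V))"
    proof -
      have "Mk k V \<le> size V" unfolding Mk_def by simp
      then show ?thesis using sz T_pos[of n] by (simp add: of_nat_diff field_simps)
    qed
    finally show "measure_pmf.expectation (urn_step l s (Suc n) V) (\<lambda>U. f (Mk k U)) =
         f (Mk k V) + real (Mk k V) / real (T n) * (f (Mk k V + 1) - f (Mk k V))" .
  qed simp_all
  finally show ?thesis .
qed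

end



lemma poch_shift: "pochhammer (a + 1) p * a = (a + of_nat p) * pochhammer (a::real) p"
  using pochhammer_rec[of a p] pochhammer_rec'[of a p] by (simp add: ac_simps)

lemma poch_ge_pow: "(x::real) \<ge> 0 \<Longrightarrow> x ^ n \<le> pochhammer x n"
proof -
  assume x: "x \<ge> 0"
  have "x ^ n = (\<Prod>i\<in>{0..<n}. x)" by simp
  also have "\<dots> \<le> (\<Prod>i\<in>{0..<n}. x + of_nat i)" by (intro prod_mono) (use x in auto)
  finally show ?thesis by (simp add: pochhammer_prod)
qed

lemma poch_le_pow: "(x::real) \<ge> 0 \<Longrightarrow> pochhammer x n \<le> (x + n) ^ n"
proof -
  assume x: "x \<ge> 0"
  have "pochhammer x n = (\<Prod>i\<in>{0..<n}. x + of_nat i)" by (simp add: pochhammer_prod)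
  also have "\<dots> \<le> (\<Prod>i\<in>{0..<n}. x + n)" by (intro prod_mono) (use x in auto)
  finally show ?thesis by simp
qed

lemma pow_bound: "0 \<le> (e::real) \<Longrightarrow> e \<le> 1 \<Longrightarrow> (1 + e) ^ j \<le> 1 + (2 ^ j - 1) * e"
proof (induction j)
  case 0 then show ?case by simp
next
  case (Suc j)
  have h: "(1 + e) ^ j \<le> 1 + (2 ^ j - 1) * e" using Suc by auto
  have "(1 + e) ^ Suc j = (1 + e) ^ j * (1 + e)" by simp
  also have "\<dots> \<le> (1 + (2 ^ j - 1) * e) * (1 + e)" using h Suc.prems by (intro mult_right_mono) auto
  also have "\<dots> = 1 + 2 ^ j * e + (2 ^ j - 1) * (e * e)" by (simp add: algebra_simps)
  also have "\<dots> \<le> 1 + 2 ^ j * e + (2 ^ j - 1) * e"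
  proof -
    have "e * e \<le> e" using Suc.prems by (intro mult_right_le_one_le) auto
    moreover have "(2::real) ^ j - 1 \<ge> 0" by simp
    ultimately show ?thesis by (simp add: mult_left_mono)
  qed
  also have "\<dots> = 1 + (2 ^ Suc j - 1) * e" by (simp add: algebra_simps)
  finally show ?case .
qed

lemma bern1: "(y::real) \<ge> 0 \<Longrightarrow> real (Suc j) * y \<le> y ^ Suc j + real j"
  using Bernoulli_inequality[of "y - 1" "Suc j"] by (simp add: algebra_simps)

lemma bern2: "(x::real) > 0 \<Longrightarrow> real q + 1 \<le> x ^ q + real q / x"
proof -
  assume x: "x > 0"
  have "1 + real (Suc q) * (x - 1) \<le> x ^ Suc q" using Bernoulli_inequality[of "x - 1" "Suc q"] x by simp
  hence "(real q + 1) * x \<le> x ^ q * x + real q" by (simp add: algebra_simps)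
  hence "real q + 1 \<le> (x ^ q * x + real q) / x" using x by (simp add: le_divide_eq)
  also have "\<dots> = x ^ q + real q / x" using x by (simp add: field_simps)
  finally show ?thesis .
qed

context urnctx begin

lemma T_mono: "a \<le> b \<Longrightarrow> T a \<le> T b"
  unfolding T_def by (simp add: add_mono div_le_mono)

lemma T_n0: "T n0 = m s + (l + 1) * (k - s)"
  unfolding T_def n0_def using l1 by simp

lemma T_n0_ge: "T n0 \<ge> l + 2"
proof -
  have "k - s \<ge> 1" using ks by simp
  hence "(l + 1) * (k - s) \<ge> (l + 1) * 1" by (rule mult_le_mono2)
  hence "(l + 1) * (k - s) \<ge> l + 1" by simp
  thus ?thesis using T_n0 ms_pos by linarith
qed

lemma n0_ge: "n0 \<ge> l"
proof -
  have "k - s \<ge> 1" using ks by simp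
  hence "(k - s) * l \<ge> 1 * l" by (rule mult_le_mono1)
  thus ?thesis unfolding n0_def by simp
qed

lemma n0_mod: "n0 mod l = 0" unfolding n0_def by simp

lemma Mk_le_size: "Mk k U \<le> size U" unfolding Mk_def by simp

lemma Mk_at_n0: "U \<in> set_pmf (urn l s m n0) \<Longrightarrow> Mk k U = T n0"
proof -
  assume U: "U \<in> set_pmf (urn l s m n0)"
  have "s + n0 div l = k" unfolding n0_def using l1 ks by simp
  hence "set_mset U \<subseteq> {1..k}" using support[OF U] by simp
  hence "filter_mset (\<lambda>c. 1 \<le> c \<and> c \<le> k) U = U" by (auto intro!: filter_mset_eq_conv[THEN iffD2])
  thus ?thesis using support[OF U] unfolding Mk_def by simp
qed

lemma Mk_ge: "n \<ge> n0 \<Longrightarrow> U \<in> set_pmf (urn l s m n) \<Longrightarrow> Mk k U \<ge> T n0"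
proof (induction n arbitrary: U rule: dec_induct)
  case base then show ?case using Mk_at_n0 by simp
next
  case (step n)
  from step.prems obtain V where V: "V \<in> set_pmf (urn l s m n)"
    and U: "U \<in> set_pmf (urn_step l s (Suc n) V)" by auto
  have ne: "V \<noteq> {#}" using support[OF V] T_pos[of n] by auto
  from U ne obtain x where Ux: "U = V + {#x#} + (if l dvd Suc n then {#s + Suc n div l#} else {#})"
    unfolding urn_step_def by auto
  have "Mk k V \<le> Mk k U" unfolding Ux Mk_add by simp
  thus ?case using step.IH[OF V] by simp
qed

lemma fin_int: "integrable (measure_pmf (urn l s m n)) (f::_\<Rightarrow>real)"
  by (rule integrable_measure_pmf_finite[OF finite_support])

lemma recur:
  assumes "n \<ge> n0"
    and "\<And>M. M \<ge> T n0 \<Longrightarrow> real M * (f (M + 1) - f M) = c * f M"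
  shows "E (Suc n) f = (1 + c / real (T n)) * E n f"
proof -
  have "E (Suc n) f = measure_pmf.expectation (urn l s m n) (\<lambda>U. (1 + c / real (T n)) * f (Mk k U))"
    unfolding drift[OF assms(1)]
  proof (intro integral_cong_AE AE_pmfI)
    fix U assume U: "U \<in> set_pmf (urn l s m n)"
    have "real (Mk k U) * (f (Mk k U + 1) - f (Mk k U)) = c * f (Mk k U)"
      using assms(2) Mk_ge[OF assms(1) U] by blast
    then show "f (Mk k U) + real (Mk k U) / real (T n) * (f (Mk k U + 1) - f (Mk k U))
       = (1 + c / real (T n)) * f (Mk k U)" by (simp add: algebra_simps)
  qed simp_all
  also have "\<dots> = (1 + c / real (T n)) * E n f" unfolding E_def by simp
  finally show ?thesis .
qed

definition R :: "nat \<Rightarrow> nat \<Rightarrow> real" where "R p M = pochhammer (real M) p"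
definition G :: "nat \<Rightarrow> real" where "G M = 1 / pochhammer (real M - real (l + 1)) (l + 1)"

lemma R_id: "real M * (R p (M + 1) - R p M) = real p * R p M"
  using poch_shift[of "real M" p] unfolding R_def by (simp add: algebra_simps)

lemma G_id: assumes "M \<ge> l + 2" shows "real M * (G (M + 1) - G M) = - real (l + 1) * G M"
proof -
  define a where "a = real M - real (l + 1)"
  have a: "a > 0" using assms unfolding a_def by simp
  have pa: "pochhammer a (l + 1) > 0" using pochhammer_pos[OF a] .
  have pa1: "pochhammer (a + 1) (l + 1) > 0" using pochhammer_pos[of "a + 1"] a by simp
  have sh: "pochhammer (a + 1) (l + 1) * a = (a + real (l + 1)) * pochhammer a (l + 1)"
    using poch_shift[of a "l + 1"] by simp
  have GM1: "G (M + 1) = 1 / pochhammer (a + 1) (l + 1)" unfolding G_def a_def by (simp add: algebra_simps)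
  have GM: "G M = 1 / pochhammer a (l + 1)" unfolding G_def a_def by simp
  have M: "real M = a + real (l + 1)" unfolding a_def by simp
  show ?thesis unfolding GM1 GM M using pa pa1 a sh
    by (simp add: field_simps)
qed

end



context urnctx begin

definition QQ :: "nat \<Rightarrow> real" where
  "QQ n = pochhammer (real (T n)) (l + 1) / real (T n + l - n mod l)"

lemma mod_lt: "n mod l < l" using l1 by simp

lemma QQ_den: "real (T n + l - n mod l) = real (T n) + real l - real (n mod l)"
  using mod_lt[of n] by (simp add: of_nat_diff)

lemma QQ_pos: "QQ n > 0"
proof -
  have "real (T n) > 0" using T_pos[of n] by simp
  hence "pochhammer (real (T n)) (l + 1) > 0" by (rule pochhammer_pos)
  moreover have "T n + l - n mod l > 0" using mod_lt[of n] by simp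
  ultimately show ?thesis unfolding QQ_def by simp
qed

lemma QQ_Suc: "QQ (Suc n) = QQ n * (1 + real (l + 1) / real (T n))"
proof -
  define t where "t = real (T n)"
  have t: "t \<ge> 1" unfolding t_def using T_pos[of n] by simp
  have p0: "pochhammer t (l + 1) > 0" using pochhammer_pos[of t] t by simp
  have sh1: "pochhammer (t + 1) (l + 1) * t = (t + real (l + 1)) * pochhammer t (l + 1)"
    using poch_shift[of t "l + 1"] by simp
  have sh2: "pochhammer (t + 2) (l + 1) * (t + 1) = (t + 1 + real (l + 1)) * pochhammer (t + 1) (l + 1)"
    using poch_shift[of "t + 1" "l + 1"] by (simp add: add.assoc)
  show ?thesis
  proof (cases "l dvd Suc n")
    case True
    have r: "n mod l = l - 1" using True l1 mod_Suc[of n l] mod_lt[of n]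
      by (auto simp: dvd_eq_mod_eq_0 split: if_splits)
    have r': "Suc n mod l = 0" using True by simp
    have "T (Suc n) = T n + 2" using T_Suc[of n] True by simp
    hence T2: "real (T (Suc n)) = real (T n) + 2" by (metis of_nat_add of_nat_numeral)
    have d1: "real (T n + l - n mod l) = t + 1" unfolding QQ_den r t_def using l1 by (simp add: of_nat_diff)
    have d2: "real (T (Suc n) + l - Suc n mod l) = t + 2 + real l"
      using QQ_den[of "Suc n"] r' T2 by (simp add: t_def)
    have e1: "pochhammer (t + 1) (l + 1) = (t + real (l + 1)) * pochhammer t (l + 1) / t"
      using sh1 t by (simp add: field_simps)
    have e2: "pochhammer (t + 2) (l + 1) = (t + 1 + real (l + 1)) * pochhammer (t + 1) (l + 1) / (t + 1)"
      using sh2 t by (simp add: field_simps)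
    have "QQ (Suc n) = pochhammer (t + 2) (l + 1) / (t + 2 + real l)"
      unfolding QQ_def d2 T2 t_def by (simp add: add.commute)
    also have "\<dots> = (t + 2 + real l) * (pochhammer (t + 1) (l + 1) / (t + 1)) / (t + 2 + real l)"
      unfolding e2 by (simp add: algebra_simps)
    also have "\<dots> = pochhammer (t + 1) (l + 1) / (t + 1)"
      using t by (intro nonzero_mult_div_cancel_left) simp
    also have "\<dots> = pochhammer t (l + 1) / (t + 1) * (1 + real (l + 1) / t)"
      unfolding e1 using t by (simp add: field_simps)
    also have "\<dots> = QQ n * (1 + real (l + 1) / real (T n))"
      unfolding QQ_def d1 t_def by simp
    finally show ?thesis .
  next
    case False
    have r': "Suc n mod l = Suc (n mod l)" using False l1 mod_Suc[of n l]
      by (auto simp: dvd_eq_mod_eq_0 split: if_splits)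
    have T1: "real (T (Suc n)) = t + 1" unfolding t_def using False by (simp add: T_Suc)
    have d2: "real (T (Suc n) + l - Suc n mod l) = real (T n + l - n mod l)"
      using QQ_den[of "Suc n"] QQ_den[of n] r' T1 by (simp add: t_def)
    have d1: "real (T n + l - n mod l) > 0" using mod_lt[of n] by simp
    define D where "D = real (T n + l - n mod l)"
    have e1: "pochhammer (t + 1) (l + 1) = (t + real (l + 1)) * pochhammer t (l + 1) / t"
      using sh1 t by (simp add: field_simps)
    have "QQ (Suc n) = pochhammer (t + 1) (l + 1) / D"
      unfolding QQ_def d2 T1 D_def by simp
    also have "\<dots> = pochhammer t (l + 1) / D * (1 + real (l + 1) / t)"
      unfolding e1 using t by (simp add: field_simps)
    also have "\<dots> = QQ n * (1 + real (l + 1) / real (T n))"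
      unfolding QQ_def D_def t_def by simp
    finally show ?thesis .
  qed
qed

lemma E_n0: "E n0 f = f (T n0)"
proof -
  have "E n0 f = measure_pmf.expectation (urn l s m n0) (\<lambda>U. f (T n0))"
    unfolding E_def by (intro integral_cong_AE AE_pmfI) (simp_all add: Mk_at_n0)
  thus ?thesis by simp
qed

lemma E_nonneg:
  assumes "n \<ge> n0" "\<And>M. M \<ge> T n0 \<Longrightarrow> f M \<ge> 0" shows "E n f \<ge> 0"
  unfolding E_def by (intro integral_nonneg_AE AE_pmfI) (use assms Mk_ge in auto)

lemma E_mono:
  assumes "n \<ge> n0" "\<And>M. M \<ge> T n0 \<Longrightarrow> f M \<le> g M" shows "E n f \<le> E n g"
  unfolding E_def by (intro integral_mono_AE fin_int AE_pmfI) (use assms Mk_ge in auto)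

lemma ER: "n \<ge> n0 \<Longrightarrow> E n (R (l + 1)) = (real (T n0) + real l) * QQ n"
proof (induction n rule: dec_induct)
  case base
  have "QQ n0 = pochhammer (real (T n0)) (l + 1) / (real (T n0) + real l)"
    unfolding QQ_def n0_mod by simp
  moreover have "real (T n0) + real l > 0" using T_pos[of n0] by simp
  ultimately show ?case unfolding E_n0 R_def by simp
next
  case (step n)
  have "E (Suc n) (R (l + 1)) = (1 + real (l + 1) / real (T n)) * E n (R (l + 1))"
    by (rule recur[OF step.hyps(1)]) (rule R_id)
  then show ?case using step.IH QQ_Suc[of n] by simp
qed

lemma T_minus_l: "n \<ge> l \<Longrightarrow> T (n - l) + (l + 1) = T n"
  unfolding T_def using le_div_geq[of l n] l1 by simp

lemma EG: "n \<ge> n0 \<Longrightarrow> E n G * QQ (n - l) = E n0 G * QQ (n0 - l)"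
proof (induction n rule: dec_induct)
  case base then show ?case by simp
next
  case (step n)
  have nl: "n \<ge> l" using step.hyps(1) n0_ge by simp
  have Tn: "T n \<ge> l + 2" using T_mono[OF step.hyps(1)] T_n0_ge by simp
  have rec: "E (Suc n) G = (1 + (- real (l + 1)) / real (T n)) * E n G"
    by (rule recur[OF step.hyps(1)]) (use G_id T_n0_ge in auto)
  define a where "a = real (T n)"
  define b where "b = real (l + 1)"
  have ab: "a - b > 0" unfolding a_def b_def using Tn by simp
  have a0: "a > 0" using ab unfolding b_def by simp
  have e1: "E (Suc n) G = ((a - b) / a) * E n G" unfolding rec a_def[symmetric] b_def[symmetric]
    using a0 by (simp add: field_simps)
  have Tnl: "real (T (n - l)) = a - b"
    using T_minus_l[OF nl] unfolding a_def b_def by (simp add: algebra_simps flip: of_nat_add)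
  have "QQ (Suc n - l) = QQ (n - l) * (1 + b / (a - b))"
    using QQ_Suc[of "n - l"] nl unfolding Tnl b_def by (simp add: Suc_diff_le)
  also have "1 + b / (a - b) = a / (a - b)" using ab by (simp add: field_simps)
  finally have e2: "QQ (Suc n - l) = QQ (n - l) * (a / (a - b))" .
  have "E (Suc n) G * QQ (Suc n - l) = E n G * QQ (n - l) * (((a - b) / a) * (a / (a - b)))"
    unfolding e1 e2 by (simp add: ac_simps)
  also have "((a - b) / a) * (a / (a - b)) = 1" using ab a0 by simp
  finally have "E (Suc n) G * QQ (Suc n - l) = E n G * QQ (n - l)" by simp
  then show ?case using step.IH by simp
qed

lemma EP: "n \<ge> n0 \<Longrightarrow> E n (R (q * (l + 1))) \<le> E n0 (R (q * (l + 1))) * (QQ n / QQ n0) ^ q"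
proof (induction n rule: dec_induct)
  case base then show ?case using QQ_pos[of n0] by simp
next
  case (step n)
  define y where "y = real (l + 1) / real (T n)"
  have y: "y \<ge> 0" unfolding y_def by simp
  have rec: "E (Suc n) (R (q * (l + 1))) = (1 + real (q * (l + 1)) / real (T n)) * E n (R (q * (l + 1)))"
    by (rule recur[OF step.hyps(1)]) (rule R_id)
  have "1 + real q * y \<le> (1 + y) ^ q" using Bernoulli_inequality[of y q] y by simp
  moreover have "real (q * (l + 1)) / real (T n) = real q * y" unfolding y_def by (simp add: algebra_simps)
  ultimately have b: "1 + real (q * (l + 1)) / real (T n) \<le> (1 + y) ^ q" by simp
  have nn: "E n (R (q * (l + 1))) \<ge> 0"
    by (rule E_nonneg[OF step.hyps(1)]) (use T_n0_ge in \<open>auto simp: R_def intro!: pochhammer_nonneg\<close>)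
  have "E (Suc n) (R (q * (l + 1))) \<le> (1 + y) ^ q * E n (R (q * (l + 1)))"
    unfolding rec using b nn by (rule mult_right_mono)
  also have "\<dots> \<le> (1 + y) ^ q * (E n0 (R (q * (l + 1))) * (QQ n / QQ n0) ^ q)"
    using step.IH y by (intro mult_left_mono) auto
  also have "\<dots> = E n0 (R (q * (l + 1))) * (QQ (Suc n) / QQ n0) ^ q"
    unfolding QQ_Suc y_def[symmetric] by (simp add: power_mult_distrib power_divide ac_simps)
  finally show ?case .
qed

end



context urnctx begin

lemma E_add: "E n (\<lambda>M. f M + g M) = E n f + E n g"
  unfolding E_def by (rule Bochner_Integration.integral_add[OF fin_int fin_int])

lemma E_cmult: "E n (\<lambda>M. c * f M) = c * E n f"
  unfolding E_def by (rule Bochner_Integration.integral_mult_right_zero)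

lemma E_const: "E n (\<lambda>M. c) = c"
  unfolding E_def by simp

lemma QQ_den_bounds: "real (T n) + 1 \<le> real (T n + l - n mod l)" "real (T n + l - n mod l) \<le> real (T n) + real l"
  using mod_lt[of n] unfolding QQ_den by auto

lemma QQ_lower: "QQ n \<ge> real (T n) ^ l"
proof -
  define t where "t = real (T n)"
  define D where "D = real (T n + l - n mod l)"
  have t: "t \<ge> 1" unfolding t_def using T_pos[of n] by simp
  have D: "t + 1 \<le> D" "D \<le> t + real l" using QQ_den_bounds[of n] unfolding t_def D_def by auto
  have p: "pochhammer t l \<ge> t ^ l" using poch_ge_pow t by simp
  have pp: "pochhammer t (l + 1) = (t + real l) * pochhammer t l" using pochhammer_rec'[of t l] by simp
  have p0: "pochhammer t l \<ge> 0" using pochhammer_nonneg[of t l] t by simp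
  have D0: "D > 0" using D t by simp
  have "pochhammer t l * D \<le> pochhammer t l * (t + real l)" using p0 D by (intro mult_left_mono) auto
  hence "pochhammer t l \<le> (t + real l) * pochhammer t l / D"
    using D0 by (simp add: le_divide_eq ac_simps)
  thus ?thesis using p unfolding QQ_def pp t_def[symmetric] D_def[symmetric] by simp
qed

lemma QQ_upper: "QQ n \<le> (real (T n) + real l + 1) ^ l"
proof -
  define t where "t = real (T n)"
  define D where "D = real (T n + l - n mod l)"
  have t: "t \<ge> 1" unfolding t_def using T_pos[of n] by simp
  have D: "t + 1 \<le> D" "D \<le> t + real l" using QQ_den_bounds[of n] unfolding t_def D_def by auto
  have pp: "pochhammer t (l + 1) = t * pochhammer (t + 1) l" using pochhammer_rec[of t l] by simp
  have p0: "pochhammer (t + 1) l \<ge> 0" using pochhammer_nonneg[of "t + 1" l] t by simp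
  have p1: "pochhammer (t + 1) l \<le> (t + 1 + real l) ^ l" using poch_le_pow[of "t + 1" l] t by simp
  have D0: "D > 0" using D t by simp
  have "t * pochhammer (t + 1) l \<le> D * pochhammer (t + 1) l" using p0 D by (intro mult_right_mono) auto
  hence "t * pochhammer (t + 1) l / D \<le> pochhammer (t + 1) l" using D0 by (simp add: divide_le_eq ac_simps)
  also have "\<dots> \<le> (t + real l + 1) ^ l" using p1 by (simp add: ac_simps)
  finally show ?thesis unfolding QQ_def pp t_def[symmetric] D_def[symmetric] .
qed

lemma T_lo: "real (T n) \<ge> real n * (real l + 1) / real l"
proof -
  have eq: "n = n div l * l + n mod l" by simp
  have "real n = real (n div l) * real l + real (n mod l)"
    by (metis eq of_nat_add of_nat_mult)
  moreover have "real (n mod l) < real l" using mod_lt[of n] by simp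
  ultimately have "real n < (real (n div l) + 1) * real l" by (simp add: algebra_simps)
  hence "real n / real l < real (n div l) + 1" using l1 by (simp add: divide_less_eq)
  moreover have "real (m s) \<ge> 1" using ms_pos by simp
  moreover have "real (T n) = real (m s) + real n + real (n div l)" unfolding T_def by simp
  moreover have "real n * (real l + 1) / real l = real n + real n / real l" using l1 by (simp add: field_simps)
  ultimately show ?thesis by linarith
qed

lemma T_hi: "real (T n) \<le> real n * (real l + 1) / real l + real (m s)"
proof -
  have "n div l * l \<le> n" by simp
  hence "real (n div l) * real l \<le> real n" by (metis of_nat_le_iff of_nat_mult)
  hence "real (n div l) \<le> real n / real l" using l1 by (simp add: le_divide_eq)
  moreover have "real (T n) = real (m s) + real n + real (n div l)" unfolding T_def by simp
  moreover have "real n * (real l + 1) / real l = real n + real n / real l" using l1 by (simp add: field_simps)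
  ultimately show ?thesis by linarith
qed

lemma partB: "\<exists>r. r \<in> O(\<lambda>n. 1 / real n) \<and>
   (\<forall>\<^sub>F n in at_top. E n (R (l + 1)) = (real (T n0) + real l) * real n ^ l * (real (l + 1) / real l) ^ l * (1 + r n))"
proof -
  define r where "r n = QQ n / (real n * (real (l + 1) / real l)) ^ l - 1" for n
  define cc where "cc = real (m s) + real l + 1"
  have main: "\<bar>r n\<bar> \<le> 2 ^ l * cc * \<bar>1 / real n\<bar>" if n1: "n \<ge> m s + l + 1" for n
  proof -
    define x where "x = real n * (real (l + 1) / real l)"
    have nge: "real n \<ge> cc" unfolding cc_def using n1 by (metis add.assoc of_nat_add of_nat_le_iff of_nat_1)
    have cc1: "cc \<ge> 1" unfolding cc_def by simp
    have n0': "real n > 0" using nge cc1 by simp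
    have xn: "x \<ge> real n" unfolding x_def using l1 n0' by (simp add: field_simps)
    have x0: "x > 0" using xn n0' by simp
    have Tx: "real (T n) \<ge> x" using T_lo[of n] unfolding x_def by (simp add: field_simps)
    have Tx2: "real (T n) + real l + 1 \<le> x + cc" using T_hi[of n] unfolding x_def cc_def by (simp add: field_simps)
    have lo: "x ^ l \<le> QQ n" using power_mono[OF Tx, of l] x0 QQ_lower[of n] by simp
    have hi: "QQ n \<le> (x + cc) ^ l"
      proof -
      have "(real (T n) + real l + 1) ^ l \<le> (x + cc) ^ l" by (rule power_mono[OF Tx2]) simp
      thus ?thesis using QQ_upper[of n] by linarith
    qed
    define e where "e = cc / x"
    have e0: "e \<ge> 0" unfolding e_def using x0 cc1 by simp
    have en: "e \<le> cc / real n" unfolding e_def using x0 xn cc1 n0' by (intro divide_left_mono) auto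
    have "cc / real n \<le> 1" using nge n0' by (simp add: divide_le_eq)
    hence e1: "e \<le> 1" using en by linarith
    have xp: "x ^ l > 0" using x0 by simp
    have r_eq: "r n = QQ n / x ^ l - 1" unfolding r_def x_def by simp
    have xe: "(x + cc) / x = 1 + e" unfolding e_def using x0 by (simp add: field_simps)
    have "QQ n / x ^ l \<le> (x + cc) ^ l / x ^ l" using hi xp by (simp add: divide_right_mono)
    also have "\<dots> = ((x + cc) / x) ^ l" by (simp add: power_divide)
    also have "\<dots> = (1 + e) ^ l" by (simp only: xe)
    also have "\<dots> \<le> 1 + (2 ^ l - 1) * e" by (rule pow_bound[OF e0 e1])
    also have "\<dots> \<le> 1 + 2 ^ l * e" using e0 by (simp add: mult_right_mono)
    also have "\<dots> \<le> 1 + 2 ^ l * (cc / real n)" using en by (intro add_left_mono mult_left_mono) auto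
    finally have up: "r n \<le> 2 ^ l * cc * (1 / real n)" unfolding r_eq by simp
    have "1 \<le> QQ n / x ^ l" using lo xp by simp
    hence "r n \<ge> 0" unfolding r_eq by simp
    thus ?thesis using up n0' by simp
  qed
  have "r \<in> O(\<lambda>n. 1 / real n)"
    by (intro bigoI[where c = "2 ^ l * cc"] eventually_mono[OF eventually_ge_at_top[of "m s + l + 1"]])
       (use main in auto)
  moreover have "\<forall>\<^sub>F n in at_top. E n (R (l + 1)) = (real (T n0) + real l) * real n ^ l * (real (l + 1) / real l) ^ l * (1 + r n)"
  proof (intro eventually_mono[OF eventually_ge_at_top[of "max n0 1"]])
    fix n assume n: "max n0 1 \<le> n"
    have np: "real n * (real (l + 1) / real l) \<noteq> 0" using n l1 by simp
    have q0: "(real n * (real (l + 1) / real l)) ^ l * (1 + r n) = QQ n"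
      unfolding r_def using np by simp
    have q: "QQ n = real n ^ l * (real (l + 1) / real l) ^ l * (1 + r n)"
      unfolding q0[symmetric] power_mult_distrib ..
    have "E n (R (l + 1)) = (real (T n0) + real l) * QQ n" using ER[of n] n by simp
    also have "\<dots> = (real (T n0) + real l) * real n ^ l * (real (l + 1) / real l) ^ l * (1 + r n)"
      unfolding q by (simp only: mult.assoc)
    finally show "E n (R (l + 1)) = (real (T n0) + real l) * real n ^ l * (real (l + 1) / real l) ^ l * (1 + r n)" .
  qed
  ultimately show ?thesis by blast
qed

definition mu :: "nat \<Rightarrow> real" where "mu n = real n powr (real l / real (l + 1))"

lemma mu_pos: "n > 0 \<Longrightarrow> mu n > 0" unfolding mu_def by simp

lemma mu_powr: "n > 0 \<Longrightarrow> mu n ^ j = real n powr (real j * real l / real (l + 1))"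
  unfolding mu_def by (subst powr_power) auto

lemma mu_pow: "n > 0 \<Longrightarrow> mu n ^ (l + 1) = real n ^ l"
proof -
  assume n: "n > 0"
  have "mu n ^ (l + 1) = real n powr (real (l + 1) * real l / real (l + 1))" by (rule mu_powr[OF n])
  also have "real (l + 1) * real l / real (l + 1) = real l" by simp
  finally show ?thesis using n by (simp add: powr_realpow)
qed

lemma G_ge: assumes "M \<ge> l + 2" shows "1 / real M ^ (l + 1) \<le> G M"
proof -
  define a where "a = real M - real (l + 1)"
  have a: "a > 0" using assms unfolding a_def by simp
  have p0: "pochhammer a (l + 1) > 0" using pochhammer_pos[OF a] .
  have "pochhammer a (l + 1) \<le> (a + real (l + 1)) ^ (l + 1)" using poch_le_pow[of a "l + 1"] a by simp
  also have "a + real (l + 1) = real M" unfolding a_def by simp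
  finally have "pochhammer a (l + 1) \<le> real M ^ (l + 1)" .
  hence "1 / real M ^ (l + 1) \<le> 1 / pochhammer a (l + 1)" using p0 by (intro divide_left_mono) auto
  thus ?thesis unfolding G_def a_def by simp
qed

lemma G_pos: "M \<ge> l + 2 \<Longrightarrow> G M > 0"
  unfolding G_def by (intro divide_pos_pos pochhammer_pos) auto

definition cG where "cG = E n0 G * QQ (n0 - l)"

lemma cG_nonneg: "cG \<ge> 0"
proof -
  have "E n0 G \<ge> 0" by (rule E_nonneg) (use G_pos T_n0_ge in \<open>auto intro: less_imp_le\<close>)
  thus ?thesis unfolding cG_def using QQ_pos[of "n0 - l"] by simp
qed

lemma partC: "\<forall>\<^sub>F n in at_top. E n (\<lambda>M. mu n / real M) \<le> (2 ^ l * cG + real l) / real (l + 1)"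
proof (intro eventually_mono[OF eventually_ge_at_top[of "max n0 (2 * l)"]])
  fix n assume n: "max n0 (2 * l) \<le> n"
  have nn0: "n \<ge> n0" using n by simp
  have npos: "n > 0" using n l1 by simp
  have mp: "mu n > 0" by (rule mu_pos[OF npos])
  have "E n (\<lambda>M. mu n / real M) \<le> E n (\<lambda>M. (real n ^ l / real (l + 1)) * G M + real l / real (l + 1))"
  proof (rule E_mono[OF nn0])
    fix M assume M: "M \<ge> T n0"
    hence M2: "M \<ge> l + 2" using T_n0_ge by simp
    have y: "mu n / real M \<ge> 0" using mp by simp
    have "real (Suc l) * (mu n / real M) \<le> (mu n / real M) ^ Suc l + real l" by (rule bern1[OF y])
    also have "(mu n / real M) ^ Suc l = real n ^ l * (1 / real M ^ (l + 1))"
      using mu_pow[OF npos] by (simp add: power_divide)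
    also have "\<dots> \<le> real n ^ l * G M" using G_ge[OF M2] by (intro mult_left_mono) auto
    finally have "real (l + 1) * (mu n / real M) \<le> real n ^ l * G M + real l" by simp
    hence "mu n / real M * real (l + 1) \<le> real n ^ l * G M + real l" by (simp only: mult.commute)
    hence "mu n / real M \<le> (real n ^ l * G M + real l) / real (l + 1)"
      by (subst pos_le_divide_eq) auto
    thus "mu n / real M \<le> (real n ^ l / real (l + 1)) * G M + real l / real (l + 1)"
      by (simp add: add_divide_distrib)
  qed
  also have "\<dots> = (real n ^ l / real (l + 1)) * E n G + real l / real (l + 1)"
    by (simp only: E_add E_cmult E_const)
  also have "\<dots> \<le> (real n ^ l / real (l + 1)) * (2 ^ l * cG / real n ^ l) + real l / real (l + 1)"
  proof -
    have nl: "n - l \<ge> 0" by simp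
    have qpos: "QQ (n - l) > 0" by (rule QQ_pos)
    have EGn: "E n G = cG / QQ (n - l)" using EG[OF nn0] qpos unfolding cG_def by (simp add: field_simps)
    have "real (T (n - l)) \<ge> real n / 2"
    proof -
      have "T (n - l) \<ge> n - l" unfolding T_def by simp
      moreover have "real (n - l) \<ge> real n / 2" using n by (simp add: of_nat_diff)
      ultimately show ?thesis by (meson of_nat_le_iff order_trans)
    qed
    hence "(real n / 2) ^ l \<le> real (T (n - l)) ^ l" by (intro power_mono) auto
    also have "\<dots> \<le> QQ (n - l)" by (rule QQ_lower)
    finally have qq: "real n ^ l / 2 ^ l \<le> QQ (n - l)" by (simp add: power_divide)
    have "cG / QQ (n - l) \<le> cG / (real n ^ l / 2 ^ l)"
      using qq cG_nonneg npos qpos by (intro divide_left_mono) auto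
    also have "\<dots> = 2 ^ l * cG / real n ^ l" by simp
    finally have "E n G \<le> 2 ^ l * cG / real n ^ l" unfolding EGn .
    thus ?thesis by (intro add_right_mono mult_left_mono) auto
  qed
  also have "(real n ^ l / real (l + 1)) * (2 ^ l * cG / real n ^ l) = 2 ^ l * cG / real (l + 1)"
    using npos by simp
  also have "2 ^ l * cG / real (l + 1) + real l / real (l + 1) = (2 ^ l * cG + real l) / real (l + 1)"
    by (simp add: add_divide_distrib)
  finally show "E n (\<lambda>M. mu n / real M) \<le> (2 ^ l * cG + real l) / real (l + 1)" .
qed

definition BC where "BC = (2 ^ l * cG + real l) / real (l + 1)"

lemma BC_pos: "BC > 0"
  unfolding BC_def using cG_nonneg l1 by (intro divide_pos_pos add_nonneg_pos) auto

lemma partA_lower: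
  assumes q: "q \<ge> 1"
  shows "\<exists>c1>0. \<forall>\<^sub>F n in at_top. c1 * mu n ^ q \<le> E n (\<lambda>M. real M ^ q)"
proof -
  define lam where "lam = 2 * real q * BC / (real q + 1)"
  have lam: "lam > 0" unfolding lam_def using BC_pos q by simp
  define c1 where "c1 = (real q + 1) / 2 / lam ^ q"
  have c1: "c1 > 0" unfolding c1_def using lam by simp
  have ev: "\<forall>\<^sub>F n in at_top. E n (\<lambda>M. mu n / real M) \<le> BC \<and> n \<ge> n0 \<and> n > 0"
    using partC[folded BC_def] eventually_ge_at_top[of n0] eventually_gt_at_top[of 0]
    by eventually_elim auto
  have "\<forall>\<^sub>F n in at_top. c1 * mu n ^ q \<le> E n (\<lambda>M. real M ^ q)"
  proof (rule eventually_mono[OF ev])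
    fix n assume n: "E n (\<lambda>M. mu n / real M) \<le> BC \<and> n \<ge> n0 \<and> n > 0"
    hence nn0: "n \<ge> n0" and npos: "n > 0" and EB: "E n (\<lambda>M. mu n / real M) \<le> BC" by auto
    have mp: "mu n > 0" by (rule mu_pos[OF npos])
    define a where "a = lam ^ q / mu n ^ q"
    define b where "b = real q / lam"
    have "E n (\<lambda>M. real q + 1) \<le> E n (\<lambda>M. a * real M ^ q + b * (mu n / real M))"
    proof (rule E_mono[OF nn0])
      fix M assume M: "M \<ge> T n0"
      hence Mp: "real M > 0" using T_n0_ge by simp
      have x: "lam * real M / mu n > 0" using lam Mp mp by simp
      have "real q + 1 \<le> (lam * real M / mu n) ^ q + real q / (lam * real M / mu n)" by (rule bern2[OF x])
      also have "(lam * real M / mu n) ^ q = a * real M ^ q" unfolding a_def by (simp add: power_divide power_mult_distrib)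
      also have "real q / (lam * real M / mu n) = b * (mu n / real M)" unfolding b_def using lam Mp mp by simp
      finally show "real q + 1 \<le> a * real M ^ q + b * (mu n / real M)" .
    qed
    also have "\<dots> = a * E n (\<lambda>M. real M ^ q) + b * E n (\<lambda>M. mu n / real M)"
      by (simp only: E_add E_cmult)
    also have "\<dots> \<le> a * E n (\<lambda>M. real M ^ q) + b * BC"
      using EB lam unfolding b_def by (intro add_left_mono mult_left_mono) auto
    also have "b * BC = (real q + 1) / 2" unfolding b_def lam_def using BC_pos q by (simp add: field_simps)
    finally have "real q + 1 \<le> a * E n (\<lambda>M. real M ^ q) + (real q + 1) / 2" unfolding E_const .
    moreover have "\<And>Z::real. real q + 1 \<le> Z + (real q + 1) / 2 \<Longrightarrow> (real q + 1) / 2 \<le> Z" by (simp add: field_simps)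
    ultimately have "(real q + 1) / 2 \<le> a * E n (\<lambda>M. real M ^ q)" by blast
    hence "(real q + 1) / 2 / a \<le> E n (\<lambda>M. real M ^ q)"
      using lam mp unfolding a_def by (subst divide_le_eq) (auto simp: ac_simps)
    also have "(real q + 1) / 2 / a = c1 * mu n ^ q" unfolding a_def c1_def by simp
    finally show "c1 * mu n ^ q \<le> E n (\<lambda>M. real M ^ q)" .
  qed
  thus ?thesis using c1 by blast
qed

lemma partA_upper:
  shows "\<exists>c2>0. \<forall>\<^sub>F n in at_top. E n (\<lambda>M. real M ^ q) \<le> c2 * mu n ^ q"
proof -
  define p where "p = q * (l + 1)"
  define A0 where "A0 = E n0 (R p)"
  have A0: "A0 \<ge> 0" unfolding A0_def E_n0 R_def using T_pos[of n0] by (intro pochhammer_nonneg) auto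
  define c2 where "c2 = (A0 * 3 ^ (l * q) / QQ n0 ^ q + real l) / real (l + 1)"
  have c2: "c2 > 0" unfolding c2_def using A0 QQ_pos[of n0] l1 by (intro divide_pos_pos add_nonneg_pos) auto
  have "\<forall>\<^sub>F n in at_top. E n (\<lambda>M. real M ^ q) \<le> c2 * mu n ^ q"
  proof (rule eventually_mono[OF eventually_ge_at_top[of "max n0 (m s + l + 1)"]])
    fix n assume n: "max n0 (m s + l + 1) \<le> n"
    have nn0: "n \<ge> n0" and npos: "n > 0" using n by auto
    have mp: "mu n > 0" by (rule mu_pos[OF npos])
    have mup: "mu n ^ p = real n ^ (l * q)"
    proof -
      have "mu n ^ p = (mu n ^ (l + 1)) ^ q" unfolding p_def by (metis power_mult mult.commute)
      also have "\<dots> = real n ^ (l * q)" unfolding mu_pow[OF npos] by (simp add: power_mult)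
      finally show ?thesis .
    qed
    have np: "real n ^ (l * q) > 0" using npos by simp
    define a where "a = mu n ^ q / real (l + 1) / real n ^ (l * q)"
    define b where "b = mu n ^ q * real l / real (l + 1)"
    have "E n (\<lambda>M. real M ^ q) \<le> E n (\<lambda>M. a * R p M + b)"
    proof (rule E_mono[OF nn0])
      fix M assume M: "M \<ge> T n0"
      define Y where "Y = (real M / mu n) ^ q"
      have Y0: "Y \<ge> 0" unfolding Y_def using mp by simp
      have "real (Suc l) * Y \<le> Y ^ Suc l + real l" by (rule bern1[OF Y0])
      also have "Y ^ Suc l = real M ^ p / mu n ^ p"
      proof -
        have "Y ^ Suc l = (real M / mu n) ^ p" unfolding Y_def p_def by (metis power_mult Suc_eq_plus1)
        thus ?thesis by (simp add: power_divide)
      qed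
      also have "\<dots> \<le> R p M / mu n ^ p" unfolding R_def using poch_ge_pow[of "real M" p] mp
        by (intro divide_right_mono) auto
      finally have "real (l + 1) * Y \<le> R p M / real n ^ (l * q) + real l" unfolding mup by simp
      hence "Y \<le> (R p M / real n ^ (l * q) + real l) / real (l + 1)"
        by (subst pos_le_divide_eq) (auto simp: mult.commute)
      hence "mu n ^ q * Y \<le> mu n ^ q * ((R p M / real n ^ (l * q) + real l) / real (l + 1))"
        using mp by (intro mult_left_mono) auto
      also have "mu n ^ q * Y = real M ^ q" unfolding Y_def using mp by (simp add: power_divide)
      also have "mu n ^ q * ((R p M / real n ^ (l * q) + real l) / real (l + 1)) = a * R p M + b"
        unfolding a_def b_def by (simp add: add_divide_distrib ring_distribs)
      finally show "real M ^ q \<le> a * R p M + b" .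
    qed
    also have "\<dots> = a * E n (R p) + b" by (simp only: E_add E_cmult E_const)
    also have "\<dots> \<le> a * (A0 * 3 ^ (l * q) * real n ^ (l * q) / QQ n0 ^ q) + b"
    proof -
      have "E n (R p) \<le> A0 * (QQ n / QQ n0) ^ q" unfolding A0_def p_def by (rule EP[OF nn0])
      also have "\<dots> \<le> A0 * ((3 * real n) ^ l / QQ n0) ^ q"
      proof -
        have "real (T n) + real l + 1 \<le> 3 * real n"
        proof -
          have "real n * 1 \<le> real n * real l" using l1 by (intro mult_left_mono) auto
          hence "real n * (real l + 1) / real l \<le> 2 * real n"
            using l1 by (simp add: divide_le_eq algebra_simps)
          moreover have "real (m s) + real l + 1 \<le> real n" using n
            by (metis add.assoc max.boundedE of_nat_1 of_nat_add of_nat_le_iff)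
          ultimately show ?thesis using T_hi[of n] by linarith
        qed
        hence "(real (T n) + real l + 1) ^ l \<le> (3 * real n) ^ l" by (intro power_mono) auto
        hence "QQ n \<le> (3 * real n) ^ l" using QQ_upper[of n] by linarith
        hence "QQ n / QQ n0 \<le> (3 * real n) ^ l / QQ n0" using QQ_pos[of n0] by (intro divide_right_mono) auto
        hence "(QQ n / QQ n0) ^ q \<le> ((3 * real n) ^ l / QQ n0) ^ q"
          using QQ_pos[of n] QQ_pos[of n0] by (intro power_mono) auto
        thus ?thesis using A0 by (intro mult_left_mono) auto
      qed
      also have "\<dots> = A0 * 3 ^ (l * q) * real n ^ (l * q) / QQ n0 ^ q"
        by (simp add: power_divide power_mult_distrib power_mult[symmetric] mult.commute)
      finally have "E n (R p) \<le> A0 * 3 ^ (l * q) * real n ^ (l * q) / QQ n0 ^ q" .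
      moreover have "a \<ge> 0" unfolding a_def using mp by simp
      ultimately show ?thesis by (intro add_right_mono mult_left_mono) auto
    qed
    also have "a * (A0 * 3 ^ (l * q) * real n ^ (l * q) / QQ n0 ^ q)
        = mu n ^ q * (A0 * 3 ^ (l * q) / QQ n0 ^ q) / real (l + 1)"
    proof -
      have Nne: "real n ^ (l * q) \<noteq> 0" using np by simp
      define X where "X = A0 * 3 ^ (l * q) / QQ n0 ^ q"
      have "A0 * 3 ^ (l * q) * real n ^ (l * q) / QQ n0 ^ q = X * real n ^ (l * q)" unfolding X_def by simp
      hence "a * (A0 * 3 ^ (l * q) * real n ^ (l * q) / QQ n0 ^ q)
          = mu n ^ q / real (l + 1) * X * (real n ^ (l * q) / real n ^ (l * q))"
        unfolding a_def by (simp only:) (simp add: ac_simps)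
      also have "real n ^ (l * q) / real n ^ (l * q) = 1" using Nne by simp
      finally show ?thesis unfolding X_def by simp
    qed
    also have "mu n ^ q * (A0 * 3 ^ (l * q) / QQ n0 ^ q) / real (l + 1) + b = c2 * mu n ^ q"
      unfolding b_def c2_def by (simp add: add_divide_distrib ring_distribs ac_simps)
    finally show "E n (\<lambda>M. real M ^ q) \<le> c2 * mu n ^ q" .
  qed
  thus ?thesis using c2 by blast
qed

end



lemma poch_prod_eq: "pochhammer (real M) (l + 1) = (\<Prod>i\<in>{0..l}. real (M + i))"
  unfolding pochhammer_prod by (simp add: atLeastLessThanSuc_atLeastAtMost)

theorem lemma3p3:
  fixes l s k q :: nat and m :: "nat \<Rightarrow> nat"
  assumes "l \<ge> 1" and "s \<ge> 1"
    and "m 1 \<ge> 1" and "\<And>j. 1 \<le> j \<Longrightarrow> j < s \<Longrightarrow> m (Suc j) - m j \<ge> 1"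
    and "k > s" and "q \<ge> 1"
  shows
    "((\<lambda>n. measure_pmf.expectation (urn l s m n) (\<lambda>U. real (Mk k U) ^ q))
       \<in> \<Theta>(\<lambda>n. real n powr (real (q * l) / real (l + 1)))) \<and>
    (\<exists>r. r \<in> O(\<lambda>n. 1 / real n) \<and>
       (\<forall>\<^sub>F n in at_top.
          measure_pmf.expectation (urn l s m n) (\<lambda>U. \<Prod>i\<in>{0..l}. real (Mk k U + i))
          = (real (m s) + real (l + 1) * real (k - s) + real l) * real n ^ l
              * (real (l + 1) / real l) ^ l * (1 + r n))) \<and>
    limsup (\<lambda>n. ereal (measure_pmf.expectation (urn l s m n)
        (\<lambda>U. real n powr (real l / real (l + 1)) / real (Mk k U)))) < \<infinity>"
proof -
  interpret U: urnctx l s k m using assms by unfold_locales auto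
  have A: "(\<lambda>n. measure_pmf.expectation (urn l s m n) (\<lambda>U. real (Mk k U) ^ q))
       \<in> \<Theta>(\<lambda>n. real n powr (real (q * l) / real (l + 1)))"
  proof -
    obtain c1 where c1: "c1 > 0" and ev1: "\<forall>\<^sub>F n in at_top. c1 * U.mu n ^ q \<le> U.E n (\<lambda>M. real M ^ q)"
      using U.partA_lower[OF assms(6)] by blast
    obtain c2 where c2: "c2 > 0" and ev2: "\<forall>\<^sub>F n in at_top. U.E n (\<lambda>M. real M ^ q) \<le> c2 * U.mu n ^ q"
      using U.partA_upper by blast
    show ?thesis
    proof (rule bigthetaI'[OF c1 c2])
      show "\<forall>\<^sub>F n in at_top. c1 * norm (real n powr (real (q * l) / real (l + 1)))
          \<le> norm (measure_pmf.expectation (urn l s m n) (\<lambda>U. real (Mk k U) ^ q)) \<and>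
          norm (measure_pmf.expectation (urn l s m n) (\<lambda>U. real (Mk k U) ^ q))
          \<le> c2 * norm (real n powr (real (q * l) / real (l + 1)))"
        using ev1 ev2 eventually_gt_at_top[of 0]
      proof eventually_elim
        case (elim n)
        have g: "real n powr (real (q * l) / real (l + 1)) = U.mu n ^ q"
          using U.mu_powr[OF elim(3), of q] by simp
        have gp: "U.mu n ^ q \<ge> 0" using U.mu_pos[OF elim(3)] by simp
        have f: "measure_pmf.expectation (urn l s m n) (\<lambda>U. real (Mk k U) ^ q) = U.E n (\<lambda>M. real M ^ q)"
          unfolding U.E_def ..
        have fp: "U.E n (\<lambda>M. real M ^ q) \<ge> 0" using elim(1) c1 gp
          by (meson mult_nonneg_nonneg less_imp_le order_trans)
        show ?case unfolding g f using elim(1,2) gp fp by simp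
      qed
    qed
  qed
  have B: "\<exists>r. r \<in> O(\<lambda>n. 1 / real n) \<and>
       (\<forall>\<^sub>F n in at_top.
          measure_pmf.expectation (urn l s m n) (\<lambda>U. \<Prod>i\<in>{0..l}. real (Mk k U + i))
          = (real (m s) + real (l + 1) * real (k - s) + real l) * real n ^ l
              * (real (l + 1) / real l) ^ l * (1 + r n))"
  proof -
    obtain r where r: "r \<in> O(\<lambda>n. 1 / real n)" and ev: "\<forall>\<^sub>F n in at_top. U.E n (U.R (l + 1)) =
        (real (U.T U.n0) + real l) * real n ^ l * (real (l + 1) / real l) ^ l * (1 + r n)"
      using U.partB by blast
    have e: "U.E n (U.R (l + 1)) = measure_pmf.expectation (urn l s m n) (\<lambda>U. \<Prod>i\<in>{0..l}. real (Mk k U + i))" for n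
      unfolding U.E_def U.R_def poch_prod_eq ..
    have c: "real (U.T U.n0) + real l = real (m s) + real (l + 1) * real (k - s) + real l"
      unfolding U.T_n0 of_nat_add of_nat_mult by simp
    show ?thesis using r ev unfolding e c by blast
  qed
  have C: "limsup (\<lambda>n. ereal (measure_pmf.expectation (urn l s m n)
        (\<lambda>U. real n powr (real l / real (l + 1)) / real (Mk k U)))) < \<infinity>"
  proof -
    have "limsup (\<lambda>n. ereal (measure_pmf.expectation (urn l s m n)
        (\<lambda>U. real n powr (real l / real (l + 1)) / real (Mk k U)))) \<le> ereal U.BC"
    proof (rule Limsup_bounded)
      show "\<forall>\<^sub>F n in sequentially. ereal (measure_pmf.expectation (urn l s m n)
        (\<lambda>U. real n powr (real l / real (l + 1)) / real (Mk k U))) \<le> ereal U.BC"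
        using U.partC unfolding U.BC_def[symmetric] U.E_def U.mu_def by (auto elim!: eventually_mono)
    qed
    also have "\<dots> < \<infinity>" by simp
    finally show ?thesis .
  qed
  show ?thesis using A B C by blast
qed



end
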